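(* Let $y_0,z_0\in\mathbb{R}^n$ be row vectors with $y_0[i]\ge0$, $z_0[i]\ge0$ for $i\in\mathcal{V}$, $y_0[(i,j)]=z_0[(i,j)]=0$ for $(i,j)\in\mathcal{E}$, and $\sum_j z_0[j]>0$, and define $y_k=y_{k-1}M_k$, $z_k=z_{k-1}M_k$ for $k\ge1$ (same $M_k$ in both). Let $\mu_z$ satisfy $0<\mu_z\le\sum_j z_0[j]$, let $c=\min\{M[a,b]: M\in\mathcal{M},\,M[a,b]>0\}$, let $l$ be a positive integer such that for every $i\in\mathcal{V}$ there exist $l$ matrices in $\mathcal{M}$ (possibly repeated) whose product, in some order, has all entries of its column indexed by $i$ strictly positive, and set $\mu=\mu_z c^l/n$. For $i\in\mathcal{V}$, let $\tau_i^1<\tau_i^2<\cdots$ be the successive times $k$ at which $z_k[i]\ge\mu$, and let $\pi_i[t]=y_{\tau_i^t}[i]/z_{\tau_i^t}[i]$. Then for each $i\in\mathcal{V}$, with probability $1$, $\pi_i[t]$ converges as $t\to\infty$ to $\pi^*=\dfrac{\sum_j y_0[j]}{\sum_j z_0[j]}$.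
   Context: Let $\mathcal{G}=(\mathcal{V},\mathcal{E})$ be a strongly connected directed graph with $\mathcal{V}=\{1,\dots,m\}$, with a self-loop $(i,i)\in\mathcal{E}$ at every node. Let $\mathcal{O}_i=\{j:(i,j)\in\mathcal{E}\}$ and $D_i=|\mathcal{O}_i|$. At each time step $k\ge1$ each link $(i,j)\in\mathcal{E}$ is reliable with probability $q_{ij}\in(0,1]$, independently across links and across time steps; let $X_k[i,j]=1$ if $(i,j)$ is reliable at step $k$ and $0$ otherwise. Let $n=m+|\mathcal{E}|$ and index vector entries and rows/columns of $n\times n$ matrices by $\mathcal{V}\cup\mathcal{E}$ (each link $(i,j)$ is an additional "virtual buffer" index). The random matrix $M_k$ is defined by: for $i\in\mathcal{V}$ and $(i,j)\in\mathcal{E}$, $M_k[i,j]=X_k[i,j]/D_i$ and $M_k[i,(i,j)]=(1-X_k[i,j])/D_i$, all other entries of row $i$ being $0$; for $(i,j)\in\mathcal{E}$, $M_k[(i,j),j]=X_k[i,j]$ and $M_k[(i,j),(i,j)]=1-X_k[i,j]$, all other entries of row $(i,j)$ being $0$. $\mathcal{M}$ denotes the finite set of all $2^{|\mathcal{E}|}$ matrices obtainable this way. The sums $\sum_j$ over $y_0,z_0$ range over all $n$ indices (equivalently over $\mathcal{V}$). The times $\tau_i^t$ are well defined (infinitely many) with probability $1$. *)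

theory Defs
  imports "HOL-Probability.Probability"
begin

text \<open>Indices of vectors / matrices: nodes \<open>Inl i\<close> and virtual buffers \<open>Inr (i,j)\<close>.\<close>

type_synonym 'v idx = "'v + ('v \<times> 'v)"

definition Idx :: "'v set \<Rightarrow> ('v \<times> 'v) set \<Rightarrow> 'v idx set" where
  "Idx V E = Inl ` V \<union> Inr ` E"

definition outdeg :: "('v \<times> 'v) set \<Rightarrow> 'v \<Rightarrow> nat" where
  "outdeg E i = card {j. (i, j) \<in> E}"

text \<open>The matrix \<open>M\<close> determined by a link-reliability pattern \<open>x\<close> (x e = True iff link e reliable).\<close>

fun Mmat :: "('v \<times> 'v) set \<Rightarrow> (('v \<times> 'v) \<Rightarrow> bool) \<Rightarrow> 'v idx \<Rightarrow> 'v idx \<Rightarrow> real" where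
  "Mmat E x (Inl i) (Inl j) =
     (if (i, j) \<in> E then of_bool (x (i, j)) / real (outdeg E i) else 0)"
| "Mmat E x (Inl i) (Inr (i', j)) =
     (if i' = i \<and> (i, j) \<in> E then (1 - of_bool (x (i, j))) / real (outdeg E i) else 0)"
| "Mmat E x (Inr (i, j)) (Inl j') =
     (if (i, j) \<in> E \<and> j' = j then of_bool (x (i, j)) else 0)"
| "Mmat E x (Inr (i, j)) (Inr e') =
     (if (i, j) \<in> E \<and> e' = (i, j) then 1 - of_bool (x (i, j)) else 0)"

definition Mset :: "('v \<times> 'v) set \<Rightarrow> ('v idx \<Rightarrow> 'v idx \<Rightarrow> real) set" where
  "Mset E = range (Mmat E)"

definition vecmat :: "'i set \<Rightarrow> ('i \<Rightarrow> real) \<Rightarrow> ('i \<Rightarrow> 'i \<Rightarrow> real) \<Rightarrow> 'i \<Rightarrow> real" where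
  "vecmat I y A = (\<lambda>b. \<Sum>a\<in>I. y a * A a b)"

definition matmul :: "'i set \<Rightarrow> ('i \<Rightarrow> 'i \<Rightarrow> real) \<Rightarrow> ('i \<Rightarrow> 'i \<Rightarrow> real) \<Rightarrow> 'i \<Rightarrow> 'i \<Rightarrow> real" where
  "matmul I A B = (\<lambda>a b. \<Sum>c\<in>I. A a c * B c b)"

definition idmat :: "'i \<Rightarrow> 'i \<Rightarrow> real" where
  "idmat = (\<lambda>a b. of_bool (a = b))"

definition matprod_list :: "'i set \<Rightarrow> ('i \<Rightarrow> 'i \<Rightarrow> real) list \<Rightarrow> 'i \<Rightarrow> 'i \<Rightarrow> real" where
  "matprod_list I Ms = foldr (matmul I) Ms idmat"

fun traj :: "'v set \<Rightarrow> ('v \<times> 'v) set \<Rightarrow> (nat \<Rightarrow> ('v \<times> 'v) \<Rightarrow> bool) \<Rightarrow> ('v idx \<Rightarrow> real)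
             \<Rightarrow> nat \<Rightarrow> 'v idx \<Rightarrow> real" where
  "traj V E X y0 0 = y0"
| "traj V E X y0 (Suc k) = vecmat (Idx V E) (traj V E X y0 k) (Mmat E (X (Suc k)))"

definition cmin :: "'v set \<Rightarrow> ('v \<times> 'v) set \<Rightarrow> real" where
  "cmin V E = Min {M a b | M a b. M \<in> Mset E \<and> a \<in> Idx V E \<and> b \<in> Idx V E \<and> M a b > 0}"

end

theory Submission
  imports Defs
begin


lemma Mmat_nonneg: "Mmat E x a b \<ge> 0"
  by (cases "(E,x,a,b)" rule: Mmat.cases) auto

lemma Mmat_true: "\<forall>e\<in>E. x e \<Longrightarrow> Mmat E x = Mmat E (\<lambda>_. True)"
  apply (intro ext)
  subgoal for a b by (cases "(E,x,a,b)" rule: Mmat.cases) auto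
  done

lemma finite_Idx: "finite V \<Longrightarrow> E \<subseteq> V \<times> V \<Longrightarrow> finite (Idx V E)"
  unfolding Idx_def by (auto intro: finite_subset[of E "V\<times>V"])

lemma Mmat_rowsum:
  assumes finV: "finite V" and EV: "E \<subseteq> V \<times> V" and sl: "\<forall>i\<in>V. (i,i)\<in>E"
    and a: "a \<in> Idx V E"
  shows "(\<Sum>b\<in>Idx V E. Mmat E x a b) = 1"
proof (cases a)
  case (Inl i)
  have iV: "i \<in> V" using a Inl by (auto simp: Idx_def)
  define Os where "Os = {j. (i,j)\<in>E}"
  have OsV: "Os \<subseteq> V" using EV by (auto simp: Os_def)
  have finOs: "finite Os" using OsV finV finite_subset by blast
  have Dpos: "card Os > 0" using sl iV finOs by (auto simp: Os_def card_gt_0_iff)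
  have D: "outdeg E i = card Os" by (simp add: outdeg_def Os_def)
  have pt: "Mmat E x a b = (\<Sum>j\<in>Os. (if b = Inl j then of_bool (x (i,j)) / real (outdeg E i) else 0)
            + (if b = Inr (i,j) then (1 - of_bool (x (i,j))) / real (outdeg E i) else 0))" for b
  proof (cases b)
    case (Inl j')
    then show ?thesis using finOs by (simp add: Inl \<open>a = _\<close> sum.distrib Os_def)
  next
    case (Inr e)
    then obtain i' j' where e: "e = (i',j')" by (cases e)
    show ?thesis using finOs by (auto simp add: Inr e \<open>a = _\<close> sum.distrib Os_def intro!: sum.neutral)
  qed
  have "(\<Sum>b\<in>Idx V E. Mmat E x a b) = (\<Sum>j\<in>Os. \<Sum>b\<in>Idx V E. (if b = Inl j then of_bool (x (i,j)) / real (outdeg E i) else 0)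
            + (if b = Inr (i,j) then (1 - of_bool (x (i,j))) / real (outdeg E i) else 0))"
    by (simp only: pt, rule sum.swap)
  also have "\<dots> = (\<Sum>j\<in>Os. 1 / real (outdeg E i))"
  proof (rule sum.cong[OF refl])
    fix j assume "j \<in> Os"
    then have "Inl j \<in> Idx V E" "Inr (i,j) \<in> Idx V E" using OsV by (auto simp: Idx_def Os_def)
    then show "(\<Sum>b\<in>Idx V E. (if b = Inl j then of_bool (x (i,j)) / real (outdeg E i) else 0)
            + (if b = Inr (i,j) then (1 - of_bool (x (i,j))) / real (outdeg E i) else 0)) = 1 / real (outdeg E i)"
      using finite_Idx[OF finV EV] by (simp add: sum.distrib add_divide_distrib[symmetric])
  qed
  also have "\<dots> = 1" using Dpos D by simp
  finally show ?thesis .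
next
  case (Inr e)
  then obtain i j where e: "a = Inr (i,j)" "(i,j)\<in>E" using a by (cases e) (auto simp: Idx_def)
  have jV: "j \<in> V" using e EV by auto
  have pt: "Mmat E x a b = (if b = Inl j then of_bool (x (i,j)) else 0) + (if b = Inr (i,j) then 1 - of_bool (x (i,j)) else 0)" for b
  proof (cases b)
    case (Inl j') then show ?thesis using e by auto
  next
    case (Inr e') then show ?thesis using e by (cases e') auto
  qed
  have "Inl j \<in> Idx V E" "Inr (i,j) \<in> Idx V E" using jV e by (auto simp: Idx_def)
  then show ?thesis using finite_Idx[OF finV EV] by (simp add: pt sum.distrib)
qed

lemma traj_shift: "traj V E X y (k + s) = traj V E (\<lambda>t. X (k + t)) (traj V E X y k) s"
  by (induction s) auto

lemma traj_lin: "traj V E X (\<lambda>a. y a - r * z a) k = (\<lambda>a. traj V E X y k a - r * traj V E X z k a)"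
proof (induction k)
  case 0 then show ?case by simp
next
  case (Suc k)
  show ?case by (simp add: Suc vecmat_def left_diff_distrib sum_subtractf sum_distrib_left mult.assoc)
qed

lemma traj_true: "\<forall>t\<in>{1..s}. \<forall>e\<in>E. X t e \<Longrightarrow> traj V E X y s = traj V E (\<lambda>_ _. True) y s"
proof (induction s)
  case 0 then show ?case by simp
next
  case (Suc s)
  then have "Mmat E (X (Suc s)) = Mmat E (\<lambda>_. True)" by (intro Mmat_true) auto
  with Suc show ?case by simp
qed

lemma traj_nonneg: "\<forall>a\<in>Idx V E. y a \<ge> 0 \<Longrightarrow> b \<in> Idx V E \<Longrightarrow> traj V E X y k b \<ge> 0"
proof (induction k arbitrary: b)
  case 0 then show ?case by simp
next
  case (Suc k)
  then show ?case by (auto simp: vecmat_def intro!: sum_nonneg mult_nonneg_nonneg Mmat_nonneg)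
qed

definition Aall :: "('v \<times> 'v) set \<Rightarrow> 'v idx \<Rightarrow> 'v idx \<Rightarrow> real" where
  "Aall E = Mmat E (\<lambda>_. True)"

lemma Aall_in: "Aall E \<in> Mset E" by (simp add: Aall_def Mset_def)

fun reach :: "'i set \<Rightarrow> ('i \<Rightarrow> 'i \<Rightarrow> real) \<Rightarrow> nat \<Rightarrow> 'i \<Rightarrow> 'i \<Rightarrow> bool" where
  "reach I A 0 a b = (a = b)"
| "reach I A (Suc s) a b = (\<exists>a'\<in>I. A a a' > 0 \<and> reach I A s a' b)"

lemma Aall_Inr_pos: "Aall E (Inr (x,y)) b > 0 \<Longrightarrow> b = Inl y \<and> (x,y) \<in> E"
  by (cases b) (auto simp: Aall_def split: if_splits)

lemma Aall_Inr_Inl: "(x,y) \<in> E \<Longrightarrow> Aall E (Inr (x,y)) (Inl y) = 1"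
  by (simp add: Aall_def)


context
  fixes V :: "'v set" and E
  assumes finV: "finite V" and EV: "E \<subseteq> V \<times> V" and sl: "\<forall>i\<in>V. (i,i)\<in>E"
begin

lemma vecmat_sum: "(\<Sum>b\<in>Idx V E. vecmat (Idx V E) y (Mmat E x) b) = (\<Sum>a\<in>Idx V E. y a)"
proof -
  have "(\<Sum>b\<in>Idx V E. vecmat (Idx V E) y (Mmat E x) b) = (\<Sum>a\<in>Idx V E. y a * (\<Sum>b\<in>Idx V E. Mmat E x a b))"
    unfolding vecmat_def by (subst sum.swap) (simp add: sum_distrib_left)
  also have "\<dots> = (\<Sum>a\<in>Idx V E. y a)" using Mmat_rowsum[OF finV EV sl] by simp
  finally show ?thesis .
qed

lemma traj_sum: "(\<Sum>b\<in>Idx V E. traj V E X y k b) = (\<Sum>a\<in>Idx V E. y a)"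
  by (induction k) (simp_all add: vecmat_sum)

lemma vecmat_norm: "(\<Sum>b\<in>Idx V E. \<bar>vecmat (Idx V E) y (Mmat E x) b\<bar>) \<le> (\<Sum>a\<in>Idx V E. \<bar>y a\<bar>)"
proof -
  have "(\<Sum>b\<in>Idx V E. \<bar>vecmat (Idx V E) y (Mmat E x) b\<bar>) \<le> (\<Sum>b\<in>Idx V E. \<Sum>a\<in>Idx V E. \<bar>y a\<bar> * Mmat E x a b)"
    unfolding vecmat_def
    by (intro sum_mono order_trans[OF sum_abs]) (simp add: abs_mult Mmat_nonneg)
  also have "\<dots> = (\<Sum>a\<in>Idx V E. \<bar>y a\<bar> * (\<Sum>b\<in>Idx V E. Mmat E x a b))"
    by (subst sum.swap) (simp add: sum_distrib_left)
  also have "\<dots> = (\<Sum>a\<in>Idx V E. \<bar>y a\<bar>)" using Mmat_rowsum[OF finV EV sl] by simp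
  finally show ?thesis .
qed

lemma traj_norm_mono: "k \<le> k' \<Longrightarrow> (\<Sum>b\<in>Idx V E. \<bar>traj V E X y k' b\<bar>) \<le> (\<Sum>b\<in>Idx V E. \<bar>traj V E X y k b\<bar>)"
proof (induction k' rule: dec_induct)
  case base then show ?case by simp
next
  case (step n) then show ?case using vecmat_norm[of "traj V E X y n" "X (Suc n)"] by simp
qed


lemma Mmat_vals: "Mmat E x a b \<in> {0,1} \<union> (\<lambda>i. 1 / real (outdeg E i)) ` {i. a = Inl i}"
  by (cases "(E,x,a,b)" rule: Mmat.cases) auto


lemma outdeg_pos: "i \<in> V \<Longrightarrow> outdeg E i > 0"
proof -
  assume iV: "i \<in> V"
  have "{j. (i,j)\<in>E} \<subseteq> V" using EV by auto
  then have "finite {j. (i,j)\<in>E}" using finV finite_subset by blast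
  then show ?thesis using sl iV by (auto simp: outdeg_def card_gt_0_iff)
qed

lemma cmin_set_fin: "finite {M a b | M a b. M \<in> Mset E \<and> a \<in> Idx V E \<and> b \<in> Idx V E \<and> M a b > 0}"
proof (rule finite_subset)
  show "{M a b | M a b. M \<in> Mset E \<and> a \<in> Idx V E \<and> b \<in> Idx V E \<and> M a b > 0} \<subseteq> {0,1} \<union> (\<lambda>i. 1 / real (outdeg E i)) ` V"
  proof safe
    fix M a b assume "M \<in> Mset E" "a \<in> Idx V E" "M a b \<notin> (\<lambda>i. 1 / real (outdeg E i)) ` V" "M a b \<noteq> 0"
    then obtain x where "M = Mmat E x" by (auto simp: Mset_def)
    with Mmat_vals[of x a b] \<open>a \<in> Idx V E\<close> \<open>M a b \<notin> _\<close> \<open>M a b \<noteq> 0\<close>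
    show "M a b = 1" by (auto simp: Idx_def)
  qed
  show "finite ({0,1} \<union> (\<lambda>i. 1 / real (outdeg E i)) ` V)" using finV by simp
qed

lemma cmin_le: "M \<in> Mset E \<Longrightarrow> a \<in> Idx V E \<Longrightarrow> b \<in> Idx V E \<Longrightarrow> M a b > 0 \<Longrightarrow> cmin V E \<le> M a b"
  unfolding cmin_def by (rule Min_le[OF cmin_set_fin]) blast

lemma cmin_pos_le1: assumes "V \<noteq> {}" shows "0 < cmin V E" "cmin V E \<le> 1"
proof -
  obtain i where iV: "i \<in> V" using assms by auto
  let ?S = "{M a b | M a b. M \<in> Mset E \<and> a \<in> Idx V E \<and> b \<in> Idx V E \<and> M a b > 0}"
  have ii: "Inl i \<in> Idx V E" using iV by (simp add: Idx_def)
  have "Aall E (Inl i) (Inl i) = 1 / real (outdeg E i)" using sl iV by (simp add: Aall_def)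
  moreover have "1 / real (outdeg E i) > 0" using outdeg_pos[OF iV] by simp
  ultimately have mem: "1 / real (outdeg E i) \<in> ?S" using ii Aall_in by (metis (mono_tags, lifting) mem_Collect_eq)
  then have ne: "?S \<noteq> {}" by auto
  have "\<forall>v\<in>?S. v > 0" by auto
  then show "0 < cmin V E" unfolding cmin_def using Min_in[OF cmin_set_fin ne] by blast
  have "cmin V E \<le> 1 / real (outdeg E i)" unfolding cmin_def by (rule Min_le[OF cmin_set_fin mem])
  also have "\<dots> \<le> 1" using outdeg_pos[OF iV] by simp
  finally show "cmin V E \<le> 1" .
qed


lemma Aall_Inl_pos: "(x,y) \<in> E \<Longrightarrow> x \<in> V \<Longrightarrow> Aall E (Inl x) (Inl y) > 0"
  using outdeg_pos[of x] by (simp add: Aall_def)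

lemma reach_mono: "i \<in> V \<Longrightarrow> reach (Idx V E) (Aall E) s a (Inl i) \<Longrightarrow> reach (Idx V E) (Aall E) (Suc s) a (Inl i)"
proof (induction s arbitrary: a)
  case 0
  then show ?case using Aall_Inl_pos[of i i] sl by (auto simp: Idx_def)
next
  case (Suc s)
  then show ?case by (metis reach.simps(2))
qed

lemma reach_buf: "reach (Idx V E) (Aall E) s (Inr (x,y)) (Inl i) \<Longrightarrow> \<exists>s'. s = Suc s' \<and> reach (Idx V E) (Aall E) s' (Inl y) (Inl i)"
  by (cases s) (auto dest: Aall_Inr_pos)

lemma reach_step:
  assumes iV: "i \<in> V" and a: "a \<in> Idx V E" and b: "b \<in> Idx V E" and pos: "Mmat E x a b > 0"
    and r: "reach (Idx V E) (Aall E) s b (Inl i)"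
  shows "reach (Idx V E) (Aall E) (Suc s) a (Inl i)"
proof (cases a)
  case (Inl u)
  have uV: "u \<in> V" using a Inl by (auto simp: Idx_def)
  show ?thesis
  proof (cases b)
    case (Inl v)
    then have "(u,v) \<in> E" using pos \<open>a = Inl u\<close> by (auto split: if_splits)
    then show ?thesis using Aall_Inl_pos[OF _ uV] r b \<open>a = Inl u\<close> Inl by auto
  next
    case (Inr e)
    then obtain u' v where e: "b = Inr (u',v)" by (cases e) auto
    then have uv: "u' = u" "(u,v) \<in> E" using pos \<open>a = Inl u\<close> by (auto split: if_splits)
    obtain s' where s': "s = Suc s'" "reach (Idx V E) (Aall E) s' (Inl v) (Inl i)" using reach_buf r e by blast
    have "reach (Idx V E) (Aall E) s (Inl v) (Inl i)" using reach_mono[OF iV s'(2)] s'(1) by simp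
    moreover have "Inl v \<in> Idx V E" using uv EV by (auto simp: Idx_def)
    ultimately show ?thesis using Aall_Inl_pos[OF uv(2) uV] \<open>a = Inl u\<close> by auto
  qed
next
  case (Inr e)
  then obtain u v where e: "a = Inr (u,v)" by (cases e) auto
  have uvE: "(u,v) \<in> E" using pos e by (cases b) (auto split: if_splits)
  have vI: "Inl v \<in> Idx V E" using uvE EV by (auto simp: Idx_def)
  show ?thesis
  proof (cases b)
    case (Inl v')
    then have "v' = v" using pos e by (auto split: if_splits)
    then show ?thesis using r Inl e Aall_Inr_Inl[OF uvE] vI by (auto intro!: bexI[of _ "Inl v"])
  next
    case (Inr e')
    then have "e' = (u,v)" using pos e by (auto split: if_splits)
    then obtain s' where s': "s = Suc s'" "reach (Idx V E) (Aall E) s' (Inl v) (Inl i)" using reach_buf r Inr by blast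
    have "reach (Idx V E) (Aall E) s (Inl v) (Inl i)" using reach_mono[OF iV s'(2)] s'(1) by simp
    then show ?thesis using e Aall_Inr_Inl[OF uvE] vI by (auto intro!: bexI[of _ "Inl v"])
  qed
qed

lemma matprod_nonneg: "set Ms \<subseteq> Mset E \<Longrightarrow> matprod_list (Idx V E) Ms a b \<ge> 0"
proof (induction Ms arbitrary: a b)
  case Nil then show ?case by (simp add: matprod_list_def idmat_def)
next
  case (Cons M Ms)
  then obtain x where "M = Mmat E x" by (auto simp: Mset_def)
  with Cons show ?case
    by (auto simp: matprod_list_def matmul_def intro!: sum_nonneg mult_nonneg_nonneg Mmat_nonneg)
qed

lemma matprod_reach:
  assumes iV: "i \<in> V"
  shows "set Ms \<subseteq> Mset E \<Longrightarrow> a \<in> Idx V E \<Longrightarrow> b \<in> Idx V E \<Longrightarrow> matprod_list (Idx V E) Ms a b > 0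
    \<Longrightarrow> reach (Idx V E) (Aall E) s b (Inl i) \<Longrightarrow> reach (Idx V E) (Aall E) (s + length Ms) a (Inl i)"
proof (induction Ms arbitrary: a)
  case Nil then show ?case by (simp add: matprod_list_def idmat_def split: if_splits)
next
  case (Cons M Ms)
  obtain x where M: "M = Mmat E x" using Cons.prems by (auto simp: Mset_def)
  have "0 < (\<Sum>c\<in>Idx V E. M a c * matprod_list (Idx V E) Ms c b)"
    using Cons.prems by (simp add: matprod_list_def matmul_def)
  then obtain c where c: "c \<in> Idx V E" "M a c * matprod_list (Idx V E) Ms c b > 0"
    by (metis (no_types, lifting) linorder_not_less sum_nonpos)
  have "M a c \<ge> 0" "matprod_list (Idx V E) Ms c b \<ge> 0" using M Mmat_nonneg matprod_nonneg Cons.prems by auto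
  then have "M a c > 0" "matprod_list (Idx V E) Ms c b > 0" using c(2)
    by (auto simp: zero_less_mult_iff)
  then have "reach (Idx V E) (Aall E) (s + length Ms) c (Inl i)" using Cons c by auto
  then show ?case using reach_step[OF iV Cons.prems(2) c(1)] \<open>M a c > 0\<close> M by simp
qed

lemma reach_lower:
  assumes "V \<noteq> {}"
  shows "\<forall>a\<in>Idx V E. y a \<ge> 0 \<Longrightarrow> a \<in> Idx V E \<Longrightarrow> reach (Idx V E) (Aall E) s a b
    \<Longrightarrow> traj V E (\<lambda>_ _. True) y s b \<ge> cmin V E ^ s * y a"
proof (induction s arbitrary: y a)
  case 0 then show ?case by simp
next
  case (Suc s)
  obtain a' where a': "a' \<in> Idx V E" "Aall E a a' > 0" "reach (Idx V E) (Aall E) s a' b" using Suc.prems by auto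
  define y' where "y' = traj V E (\<lambda>_ _. True) y 1"
  have y'nn: "\<forall>a\<in>Idx V E. y' a \<ge> 0" unfolding y'_def using Suc.prems(1) by (auto simp: vecmat_def intro!: sum_nonneg mult_nonneg_nonneg Mmat_nonneg)
  have "traj V E (\<lambda>_ _. True) y (Suc s) = traj V E (\<lambda>_ _. True) y' s"
    using traj_shift[of V E "\<lambda>_ _. True" y 1 s] by (simp add: y'_def)
  moreover have "traj V E (\<lambda>_ _. True) y' s b \<ge> cmin V E ^ s * y' a'" using Suc.IH[OF y'nn a'(1) a'(3)] .
  moreover have "y' a' \<ge> cmin V E * y a"
  proof -
    have "cmin V E * y a \<le> y a * Aall E a a'"
      using cmin_le[OF Aall_in Suc.prems(2) a'(1) a'(2)] Suc.prems by (simp add: mult.commute mult_left_mono)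
    also have "\<dots> \<le> (\<Sum>c\<in>Idx V E. y c * Aall E c a')"
      using Suc.prems finite_Idx[OF finV EV]
      by (intro member_le_sum) (auto simp: Aall_def intro!: mult_nonneg_nonneg Mmat_nonneg)
    also have "\<dots> = y' a'" by (simp add: y'_def vecmat_def Aall_def)
    finally show ?thesis .
  qed
  moreover have "cmin V E ^ s \<ge> 0" using cmin_pos_le1[OF assms] by simp
  ultimately show ?case
  proof -
    assume h: "traj V E (\<lambda>_ _. True) y (Suc s) = traj V E (\<lambda>_ _. True) y' s"
      "traj V E (\<lambda>_ _. True) y' s b \<ge> cmin V E ^ s * y' a'" "y' a' \<ge> cmin V E * y a" "cmin V E ^ s \<ge> 0"
    have "cmin V E ^ Suc s * y a = cmin V E ^ s * (cmin V E * y a)" by (simp add: mult.assoc)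
    also have "\<dots> \<le> cmin V E ^ s * y' a'" using h(3,4) by (rule mult_left_mono)
    finally show ?thesis using h(1,2) by simp
  qed
qed


lemma exists_big: assumes "finite A" "A \<noteq> {}" shows "\<exists>a\<in>A. (\<Sum>b\<in>A. y b) \<le> real (card A) * y a"
proof -
  let ?m = "Max (y ` A)"
  have "?m \<in> y ` A" using assms by simp
  then obtain a where a: "a \<in> A" "y a = ?m" by auto
  have "(\<Sum>b\<in>A. y b) \<le> (\<Sum>b\<in>A. y a)" using assms a by (intro sum_mono) simp
  then show ?thesis using a by (metis sum_constant mult_of_nat_commute)
qed

context
  fixes l :: nat
  assumes neV: "V \<noteq> {}"
    and l_prop: "\<forall>i\<in>V. \<exists>Ms. length Ms = l \<and> set Ms \<subseteq> Mset E \<and>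
                    (\<forall>a\<in>Idx V E. matprod_list (Idx V E) Ms a (Inl i) > 0)"
begin

lemma card_Idx_pos: "card (Idx V E) > 0"
  using neV finite_Idx[OF finV EV] by (auto simp: Idx_def card_gt_0_iff)

lemma reach_all: "i \<in> V \<Longrightarrow> a \<in> Idx V E \<Longrightarrow> reach (Idx V E) (Aall E) l a (Inl i)"
proof -
  assume iV: "i \<in> V" and a: "a \<in> Idx V E"
  obtain Ms where Ms: "length Ms = l" "set Ms \<subseteq> Mset E" "\<forall>a\<in>Idx V E. matprod_list (Idx V E) Ms a (Inl i) > 0"
    using l_prop iV by blast
  have "Inl i \<in> Idx V E" using iV by (simp add: Idx_def)
  then show ?thesis using matprod_reach[OF iV Ms(2) a _ _, of "Inl i" 0] Ms a by simp
qed

lemma window_lower: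
  assumes iV: "i \<in> V" and y: "\<forall>a\<in>Idx V E. y a \<ge> 0"
  shows "traj V E (\<lambda>_ _. True) y l (Inl i) \<ge> cmin V E ^ l * (\<Sum>a\<in>Idx V E. y a) / real (card (Idx V E))"
proof -
  have ne: "Idx V E \<noteq> {}" using card_Idx_pos by auto
  obtain a where a: "a \<in> Idx V E" "(\<Sum>b\<in>Idx V E. y b) \<le> real (card (Idx V E)) * y a"
    using exists_big[OF finite_Idx[OF finV EV] ne] by blast
  have c: "cmin V E ^ l \<ge> 0" using cmin_pos_le1[OF neV] by simp
  have "cmin V E ^ l * (\<Sum>a\<in>Idx V E. y a) / real (card (Idx V E)) \<le> cmin V E ^ l * y a"
  proof -
    have "cmin V E ^ l * (\<Sum>a\<in>Idx V E. y a) \<le> cmin V E ^ l * (real (card (Idx V E)) * y a)"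
      using a(2) c by (rule mult_left_mono)
    then show ?thesis using card_Idx_pos by (simp add: divide_le_eq algebra_simps)
  qed
  also have "\<dots> \<le> traj V E (\<lambda>_ _. True) y l (Inl i)"
    using reach_lower[OF neV y a(1) reach_all[OF iV a(1)]] .
  finally show ?thesis .
qed

lemma window_contract:
  assumes w0: "(\<Sum>a\<in>Idx V E. w a) = 0"
  shows "(\<Sum>b\<in>Idx V E. \<bar>traj V E (\<lambda>_ _. True) w l b\<bar>)
           \<le> (1 - cmin V E ^ l / real (card (Idx V E))) * (\<Sum>a\<in>Idx V E. \<bar>w a\<bar>)"
proof -
  let ?I = "Idx V E" and ?T = "\<lambda>y. traj V E (\<lambda>_ _. True) y l" and ?n = "real (card (Idx V E))"
  let ?c = "cmin V E ^ l"
  define u0 where "u0 = (\<lambda>a. max (w a) 0)"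
  define v0 where "v0 = (\<lambda>a. max (- w a) 0)"
  have wuv: "w = (\<lambda>a. u0 a - 1 * v0 a)" by (auto simp: u0_def v0_def)
  have Tw: "?T w = (\<lambda>a. ?T u0 a - 1 * ?T v0 a)" by (subst wuv, rule traj_lin)
  have absw: "\<bar>w a\<bar> = u0 a + v0 a" for a by (auto simp: u0_def v0_def)
  define s0 where "s0 = (\<Sum>a\<in>?I. u0 a)"
  have sv: "(\<Sum>a\<in>?I. v0 a) = s0"
  proof -
    have "(\<Sum>a\<in>?I. w a) = (\<Sum>a\<in>?I. u0 a) - (\<Sum>a\<in>?I. v0 a)" by (subst wuv) (simp add: sum_subtractf)
    then show ?thesis using w0 s0_def by simp
  qed
  have nw: "(\<Sum>a\<in>?I. \<bar>w a\<bar>) = 2 * s0" by (simp add: absw sum.distrib sv s0_def)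
  have u0nn: "\<forall>a\<in>?I. u0 a \<ge> 0" and v0nn: "\<forall>a\<in>?I. v0 a \<ge> 0" by (auto simp: u0_def v0_def)
  have unn: "\<forall>b\<in>?I. ?T u0 b \<ge> 0" and vnn: "\<forall>b\<in>?I. ?T v0 b \<ge> 0"
    using traj_nonneg u0nn v0nn by blast+
  have su: "(\<Sum>b\<in>?I. ?T u0 b) = s0" using traj_sum s0_def by simp
  have svv: "(\<Sum>b\<in>?I. ?T v0 b) = s0" using traj_sum sv by simp
  obtain i where iV: "i \<in> V" using neV by auto
  have iI: "Inl i \<in> ?I" using iV by (simp add: Idx_def)
  have lu: "?T u0 (Inl i) \<ge> ?c * s0 / ?n" using window_lower[OF iV u0nn] s0_def by simp
  have lv: "?T v0 (Inl i) \<ge> ?c * s0 / ?n" using window_lower[OF iV v0nn] sv by simp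
  have ab: "\<bar>x - y\<bar> = x + y - 2 * min x y" for x y :: real by (auto simp: min_def)
  have "(\<Sum>b\<in>?I. \<bar>?T w b\<bar>) = (\<Sum>b\<in>?I. ?T u0 b + ?T v0 b - 2 * min (?T u0 b) (?T v0 b))"
    by (simp add: Tw ab)
  also have "\<dots> = 2 * s0 - 2 * (\<Sum>b\<in>?I. min (?T u0 b) (?T v0 b))"
    by (simp add: sum_subtractf sum.distrib su svv sum_distrib_left)
  also have "\<dots> \<le> 2 * s0 - 2 * min (?T u0 (Inl i)) (?T v0 (Inl i))"
  proof -
    have "min (?T u0 (Inl i)) (?T v0 (Inl i)) \<le> (\<Sum>b\<in>?I. min (?T u0 b) (?T v0 b))"
      using unn vnn iI finite_Idx[OF finV EV] by (intro member_le_sum) auto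
    then show ?thesis by simp
  qed
  also have "\<dots> \<le> 2 * s0 - 2 * (?c * s0 / ?n)" using lu lv by simp
  also have "\<dots> = (1 - ?c / ?n) * (2 * s0)" by (simp add: algebra_simps)
  finally show ?thesis using nw by simp
qed


lemma window_shift:
  assumes "\<forall>t\<in>{1..l}. \<forall>e\<in>E. X (k+t) e"
  shows "traj V E X y (k + l) = traj V E (\<lambda>_ _. True) (traj V E X y k) l"
  using traj_shift[of V E X y k l] traj_true[where s=l and X="\<lambda>t. X (k+t)"] assms by simp

lemma det_main:
  assumes W: "infinite {k. \<forall>t\<in>{1..l}. \<forall>e\<in>E. X (k+t) e}"
    and iV: "i \<in> V"
    and z0_nonneg: "\<forall>i\<in>V. z0 (Inl i) \<ge> 0"
    and z0_buf: "\<forall>e\<in>E. z0 (Inr e) = 0"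
    and z0_pos: "(\<Sum>j\<in>Idx V E. z0 j) > 0"
    and \<mu>z: "0 < \<mu>z" "\<mu>z \<le> (\<Sum>j\<in>Idx V E. z0 j)"
  shows "(let y = traj V E X y0; z = traj V E X z0;
                \<mu> = \<mu>z * cmin V E ^ l / real (card (Idx V E));
                S = {k. z k (Inl i) \<ge> \<mu>};
                \<tau> = enumerate S
            in infinite S \<and>
               (\<lambda>t. y (\<tau> t) (Inl i) / z (\<tau> t) (Inl i))
                 \<longlonglongrightarrow> (\<Sum>j\<in>Idx V E. y0 j) / (\<Sum>j\<in>Idx V E. z0 j))"
proof -
  let ?I = "Idx V E"
  define Wk where "Wk = {k. \<forall>t\<in>{1..l}. \<forall>e\<in>E. X (k+t) e}"
  define Z where "Z = (\<Sum>j\<in>?I. z0 j)"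
  define \<pi> where "\<pi> = (\<Sum>j\<in>?I. y0 j) / Z"
  define c where "c = cmin V E"
  define n where "n = real (card ?I)"
  define \<mu> where "\<mu> = \<mu>z * c ^ l / n"
  define y where "y = traj V E X y0"
  define z where "z = traj V E X z0"
  define S where "S = {k. z k (Inl i) \<ge> \<mu>}"
  define \<tau> where "\<tau> = enumerate S"
  have cpos: "c > 0" "c \<le> 1" using cmin_pos_le1[OF neV] c_def by auto
  have npos: "n > 0" using card_Idx_pos n_def by simp
  have n1: "n \<ge> 1" using card_Idx_pos n_def by simp
  have cl: "c ^ l > 0" "c ^ l \<le> 1" using cpos by (auto simp: power_le_one)
  have mupos: "\<mu> > 0" using \<mu>z cl npos by (simp add: \<mu>_def)
  have z0nn: "\<forall>a\<in>?I. z0 a \<ge> 0" using z0_nonneg z0_buf by (auto simp: Idx_def)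
  have zk_nn: "\<forall>a\<in>?I. z k a \<ge> 0" for k using traj_nonneg[OF z0nn] z_def by blast
  have zsum: "(\<Sum>a\<in>?I. z k a) = Z" for k using traj_sum z_def Z_def by simp
  have Zpos: "Z > 0" using z0_pos Z_def by simp
  have inS: "k + l \<in> S" if "k \<in> Wk" for k
  proof -
    have "z (k + l) = traj V E (\<lambda>_ _. True) (z k) l" using window_shift that Wk_def z_def by simp
    then have "z (k + l) (Inl i) \<ge> c ^ l * Z / n"
      using window_lower[OF iV zk_nn] zsum c_def n_def by simp
    moreover have "\<mu> \<le> c ^ l * Z / n" unfolding \<mu>_def using \<mu>z cl npos Z_def
      by (intro divide_right_mono) (auto simp: mult.commute mult_left_mono)
    ultimately show ?thesis unfolding S_def by simp
  qed
  have infS: "infinite S"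
  proof
    assume "finite S"
    then have "finite ((\<lambda>k. k + l) ` Wk)" using inS by (meson finite_subset image_subsetI)
    then have "finite Wk" by (rule finite_imageD) (simp add: inj_on_def)
    then show False using W Wk_def by simp
  qed
  define w0 where "w0 = (\<lambda>a. y0 a - \<pi> * z0 a)"
  define w where "w = traj V E X w0"
  have wyz: "w k a = y k a - \<pi> * z k a" for k a
    using traj_lin[of V E X y0 \<pi> z0 k] by (simp add: w_def w0_def y_def z_def)
  have w0sum: "(\<Sum>a\<in>?I. w0 a) = 0"
  proof -
    have "(\<Sum>a\<in>?I. w0 a) = (\<Sum>a\<in>?I. y0 a) - \<pi> * Z"
      by (simp add: w0_def sum_subtractf sum_distrib_left Z_def)
    then show ?thesis using Zpos by (simp add: \<pi>_def)
  qed
  define N where "N = (\<lambda>k. \<Sum>a\<in>?I. \<bar>w k a\<bar>)"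
  have Nnn: "N k \<ge> 0" for k by (simp add: N_def sum_nonneg)
  have Nmono: "k \<le> k' \<Longrightarrow> N k' \<le> N k" for k k' unfolding N_def w_def by (rule traj_norm_mono)
  define \<rho> where "\<rho> = 1 - c ^ l / n"
  have rho: "0 \<le> \<rho>" "\<rho> < 1" using cl npos n1 by (auto simp: \<rho>_def field_simps)
  have Ncontr: "N (k + l) \<le> \<rho> * N k" if "k \<in> Wk" for k
  proof -
    have "w (k + l) = traj V E (\<lambda>_ _. True) (w k) l" using window_shift that Wk_def w_def by simp
    moreover have "(\<Sum>a\<in>?I. w k a) = 0" using traj_sum w0sum w_def by simp
    ultimately show ?thesis using window_contract[of "w k"] by (simp add: N_def \<rho>_def c_def n_def)
  qed
  have Npow: "\<exists>K. N K \<le> \<rho> ^ m * N 0" for m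
  proof (induction m)
    case 0 then show ?case by (intro exI[of _ 0]) simp
  next
    case (Suc m)
    then obtain K where K: "N K \<le> \<rho> ^ m * N 0" by blast
    obtain k where k: "k \<in> Wk" "k \<ge> K" using W Wk_def infinite_nat_iff_unbounded_le by blast
    have "N (k + l) \<le> \<rho> * N k" using Ncontr k by simp
    also have "\<dots> \<le> \<rho> * N K" using Nmono k rho by (simp add: mult_left_mono)
    also have "\<dots> \<le> \<rho> * (\<rho> ^ m * N 0)" using K rho by (simp add: mult_left_mono)
    finally show ?case by (intro exI[of _ "k + l"]) (simp add: mult.assoc)
  qed
  have Nlim: "N \<longlonglongrightarrow> 0"
  proof (rule LIMSEQ_I)
    fix r :: real assume r: "r > 0"
    have "(\<lambda>m. \<rho> ^ m * N 0) \<longlonglongrightarrow> 0 * N 0" using rho by (intro tendsto_mult LIMSEQ_power_zero) auto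
    then obtain no where "\<forall>n\<ge>no. norm (\<rho> ^ n * N 0 - 0 * N 0) < r" using r LIMSEQ_D by blast
    then have m: "\<rho> ^ no * N 0 < r" by auto
    define m where "m = no"
    obtain K where K: "N K \<le> \<rho> ^ no * N 0" using Npow by blast
    show "\<exists>no. \<forall>k\<ge>no. norm (N k - 0) < r"
      using K m Nmono Nnn by (intro exI[of _ K]) (auto intro: le_less_trans order_trans)
  qed
  have smt: "strict_mono \<tau>" using infS strict_mono_enumerate \<tau>_def by blast
  have tauS: "\<tau> t \<in> S" for t using infS enumerate_in_set \<tau>_def by blast
  have Ntau: "(N \<circ> \<tau>) \<longlonglongrightarrow> 0" using LIMSEQ_subseq_LIMSEQ[OF Nlim smt] .
  have bound: "norm (y (\<tau> t) (Inl i) / z (\<tau> t) (Inl i) - \<pi>) \<le> (N \<circ> \<tau>) t / \<mu>" for t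
  proof -
    have zt: "z (\<tau> t) (Inl i) \<ge> \<mu>" using tauS[of t] S_def by simp
    then have ztp: "z (\<tau> t) (Inl i) > 0" using mupos by simp
    have iI: "Inl i \<in> ?I" using iV by (simp add: Idx_def)
    have "y (\<tau> t) (Inl i) / z (\<tau> t) (Inl i) - \<pi> = w (\<tau> t) (Inl i) / z (\<tau> t) (Inl i)"
      using ztp by (simp add: wyz field_simps)
    then have "norm (y (\<tau> t) (Inl i) / z (\<tau> t) (Inl i) - \<pi>) = \<bar>w (\<tau> t) (Inl i)\<bar> / z (\<tau> t) (Inl i)"
      using ztp by simp
    also have "\<dots> \<le> \<bar>w (\<tau> t) (Inl i)\<bar> / \<mu>" using zt mupos by (intro divide_left_mono) auto
    also have "\<dots> \<le> N (\<tau> t) / \<mu>" unfolding N_def using mupos iI finite_Idx[OF finV EV]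
      by (intro divide_right_mono member_le_sum) auto
    finally show ?thesis by simp
  qed
  have "(\<lambda>t. y (\<tau> t) (Inl i) / z (\<tau> t) (Inl i) - \<pi>) \<longlonglongrightarrow> 0"
  proof (rule Lim_null_comparison)
    show "\<forall>\<^sub>F t in sequentially. norm (y (\<tau> t) (Inl i) / z (\<tau> t) (Inl i) - \<pi>) \<le> (N \<circ> \<tau>) t / \<mu>"
      using bound by simp
    show "(\<lambda>t. (N \<circ> \<tau>) t / \<mu>) \<longlonglongrightarrow> 0" using tendsto_divide_zero[OF Ntau] by simp
  qed
  then have "(\<lambda>t. y (\<tau> t) (Inl i) / z (\<tau> t) (Inl i)) \<longlonglongrightarrow> \<pi>" by (rule LIM_zero_cancel)
  then show ?thesis using infS
    unfolding Let_def y_def z_def S_def \<tau>_def \<mu>_def c_def n_def \<pi>_def Z_def by simp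
qed

end

end




lemma prob_windows:
  fixes E :: "('v \<times> 'v) set" and q :: "('v \<times> 'v) \<Rightarrow> real"
    and M :: "'a measure" and X :: "'a \<Rightarrow> nat \<Rightarrow> ('v \<times> 'v) \<Rightarrow> bool" and l :: nat
  assumes finE: "finite E" and neE: "E \<noteq> {}"
    and q_range: "\<forall>e\<in>E. 0 < q e \<and> q e \<le> 1"
    and P: "prob_space M"
    and X_rv: "\<forall>k e. (\<lambda>\<omega>. X \<omega> k e) \<in> measurable M (count_space UNIV)"
    and X_indep: "prob_space.indep_vars M (\<lambda>_. count_space UNIV)
                     (\<lambda>(k, e) \<omega>. X \<omega> k e) ({1..} \<times> E)"
    and X_prob: "\<forall>k\<ge>1. \<forall>e\<in>E. measure M {\<omega> \<in> space M. X \<omega> k e} = q e"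
    and l_pos: "l > 0"
  shows "AE \<omega> in M. infinite {k. \<forall>t\<in>{1..l}. \<forall>e\<in>E. X \<omega> (k+t) e}"
proof -
  interpret prob_space M by (rule P)
  define Y where "Y = (\<lambda>(k, e) \<omega>. X \<omega> k e)"
  define Kb where "Kb = (\<lambda>j::nat. {j*l+1 .. j*l+l} \<times> E)"
  define B where "B = (\<lambda>j. {\<omega> \<in> space M. \<forall>ke\<in>Kb j. Y ke \<omega>})"
  have Kb_sub: "Kb j \<subseteq> {1..} \<times> E" for j by (auto simp: Kb_def)
  have Kb_fin: "finite (Kb j)" for j using finE by (simp add: Kb_def)
  have Kb_ne: "Kb j \<noteq> {}" for j using neE l_pos by (auto simp: Kb_def)
  have Kb_disj: "disjoint_family_on Kb UNIV"
  proof (auto simp: disjoint_family_on_def Kb_def)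
    fix m n k :: nat assume "m \<noteq> n" "Suc (m*l) \<le> k" "k \<le> m*l+l" "Suc (n*l) \<le> k" "k \<le> n*l+l"
    then show False
    proof (cases "m < n")
      case True
      then have "m*l + l \<le> n*l" using l_pos by (metis Suc_leI add.commute mult_Suc mult_le_mono1)
      then show False using \<open>Suc (n*l) \<le> k\<close> \<open>k \<le> m*l+l\<close> by simp
    next
      case False
      then have "n < m" using \<open>m \<noteq> n\<close> by simp
      then have "n*l + l \<le> m*l" using l_pos by (metis Suc_leI add.commute mult_Suc mult_le_mono1)
      then show False using \<open>Suc (m*l) \<le> k\<close> \<open>k \<le> n*l+l\<close> by simp
    qed
  qed
  have indY: "indep_vars (\<lambda>_. count_space UNIV) Y ({1..} \<times> E)" using X_indep Y_def by simp
  define p where "p = (\<Prod>e\<in>E. q e) ^ l"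
  have q1: "(\<Prod>e\<in>E. q e) \<le> 1" "(\<Prod>e\<in>E. q e) > 0" using q_range by (auto intro!: prod_le_1 prod_pos simp: less_imp_le)
  have ppos: "0 < p" "p \<le> 1" using q1 by (auto simp: p_def power_le_one)
  have probB: "prob (B j) = p" for j
  proof -
    have "B j = (\<Inter>ke\<in>Kb j. Y ke -` {True} \<inter> space M)" using Kb_ne[of j] by (auto simp: B_def)
    then have "prob (B j) = (\<Prod>ke\<in>Kb j. prob (Y ke -` {True} \<inter> space M))"
      using indep_varsD[OF indY Kb_ne Kb_fin Kb_sub] by simp
    also have "\<dots> = (\<Prod>ke\<in>Kb j. q (snd ke))"
    proof (rule prod.cong[OF refl])
      fix ke assume "ke \<in> Kb j"
      then obtain k e where ke: "ke = (k,e)" "k \<ge> 1" "e \<in> E" using Kb_sub by blast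
      have "Y ke -` {True} \<inter> space M = {\<omega> \<in> space M. X \<omega> k e}" by (auto simp: ke Y_def)
      then show "prob (Y ke -` {True} \<inter> space M) = q (snd ke)" using X_prob ke by simp
    qed
    also have "\<dots> = (\<Prod>(k,e)\<in>{j*l+1 .. j*l+l} \<times> E. q e)"
      by (simp add: Kb_def case_prod_beta)
    also have "\<dots> = (\<Prod>k\<in>{j*l+1 .. j*l+l}. \<Prod>e\<in>E. q e)"
      by (rule prod.cartesian_product[symmetric])
    also have "\<dots> = p" by (simp add: p_def)
    finally show ?thesis .
  qed
  have indR: "indep_vars (\<lambda>j. PiM (Kb j) (\<lambda>_. count_space UNIV)) (\<lambda>j \<omega>. restrict (\<lambda>i. Y i \<omega>) (Kb j)) UNIV"
    by (rule indep_vars_restrict[OF indY Kb_sub Kb_disj])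
  have meas: "{f \<in> space (PiM (Kb j) (\<lambda>_. count_space UNIV)). \<forall>i\<in>Kb j. f i} \<in> sets (PiM (Kb j) (\<lambda>_. count_space (UNIV::bool set)))" for j
  proof -
    have "{f \<in> space (PiM (Kb j) (\<lambda>_. count_space UNIV)). \<forall>i\<in>Kb j. f i} = PiE (Kb j) (\<lambda>_. {True})"
      unfolding space_PiM PiE_iff by (auto intro!: extensionalityI[where A="Kb j"])
    then show ?thesis using sets_PiM_I_finite[where I="Kb j" and E="\<lambda>_. {True}" and M="\<lambda>_. count_space UNIV"] Kb_fin by simp
  qed
  have indB0: "indep_events (\<lambda>j. {\<omega>\<in>space M. (\<lambda>j f. \<forall>i\<in>Kb j. f i) j (restrict (\<lambda>i. Y i \<omega>) (Kb j))}) UNIV"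
    by (rule indep_eventsI_indep_vars[OF indR, where P="\<lambda>j f. \<forall>i\<in>Kb j. f i"]) (rule meas)
  have indB: "indep_events B UNIV" using indB0 by (simp add: B_def)
  have Bev: "B j \<in> events" for j using indB by (auto simp: indep_events_def)
  have indS: "indep_sets (\<lambda>j. sigma_sets (space M) {B j}) UNIV"
  proof (rule indep_sets_sigma)
    show "indep_sets (\<lambda>i. {B i}) UNIV"
      unfolding indep_events_def_alt[symmetric] by (rule indB)
    fix i show "Int_stable {B i}"
      unfolding Int_stable_def by simp
  qed
  have probC: "prob (\<Inter>j\<in>J. space M - B j) = (1 - p) ^ card J" if J: "finite J" "J \<noteq> {}" for J
  proof -
    have "prob (\<Inter>j\<in>J. space M - B j) = (\<Prod>j\<in>J. prob (space M - B j))"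
      using J by (intro indep_setsD[OF indS]) (auto intro: sigma_sets.Compl sigma_sets.Basic)
    also have "\<dots> = (\<Prod>j\<in>J. 1 - p)" using Bev probB by (simp add: prob_compl)
    finally show ?thesis by simp
  qed
  have null: "prob {\<omega>\<in>space M. \<forall>m\<ge>N. \<omega> \<notin> B m} = 0" for N
  proof -
    let ?F = "{\<omega>\<in>space M. \<forall>m\<ge>N. \<omega> \<notin> B m}"
    have Fev: "?F \<in> events"
    proof -
      have "?F = space M \<inter> (\<Inter>m\<in>{N..}. space M - B m)" by auto
      then show ?thesis using Bev by auto
    qed
    have le: "prob ?F \<le> (1 - p) ^ Suc K" for K
    proof -
      have "?F \<subseteq> (\<Inter>j\<in>{N..N+K}. space M - B j)" by auto
      then have "prob ?F \<le> prob (\<Inter>j\<in>{N..N+K}. space M - B j)"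
        using Fev Bev by (intro finite_measure_mono) auto
      also have "\<dots> = (1 - p) ^ Suc K" using probC[of "{N..N+K}"] by simp
      finally show ?thesis .
    qed
    have "(\<lambda>K. (1 - p) ^ Suc K) \<longlonglongrightarrow> 0"
      using ppos by (intro LIMSEQ_Suc LIMSEQ_power_zero) auto
    then have "prob ?F \<le> 0" using le by (intro LIMSEQ_le_const) auto
    then show ?thesis using measure_nonneg[of M ?F] by simp
  qed
  have "AE \<omega> in M. \<exists>m\<ge>N. \<omega> \<in> B m" for N
  proof -
    let ?F = "{\<omega>\<in>space M. \<forall>m\<ge>N. \<omega> \<notin> B m}"
    have Fev: "?F \<in> events"
    proof -
      have "?F = space M \<inter> (\<Inter>m\<in>{N..}. space M - B m)" by auto
      then show ?thesis using Bev by auto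
    qed
    have "emeasure M ?F = ennreal (prob ?F)" by (rule emeasure_eq_measure)
    also have "\<dots> = 0" using null[of N] by (simp only: ennreal_0)
    finally have nF: "?F \<in> null_sets M" using Fev by (intro null_setsI)
    have eq: "{\<omega> \<in> space M. \<not> (\<exists>m\<ge>N. \<omega> \<in> B m)} = ?F" by blast
    show ?thesis by (rule AE_I'[OF nF]) (use eq in blast)
  qed
  then have "AE \<omega> in M. \<forall>N. \<exists>m\<ge>N. \<omega> \<in> B m" by (subst AE_all_countable) blast
  then show ?thesis
  proof eventually_elim
    case (elim \<omega>)
    then have h: "\<forall>N. \<exists>m\<ge>N. \<omega> \<in> B m" by blast
    show "infinite {k. \<forall>t\<in>{1..l}. \<forall>e\<in>E. X \<omega> (k+t) e}"
      unfolding infinite_nat_iff_unbounded_le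
    proof
      fix N
      obtain m where m: "m \<ge> N" "\<omega> \<in> B m" using h by blast
      have "m * l \<ge> N" proof -
        have "m * 1 \<le> m * l" using l_pos by (intro mult_le_mono2) simp
        then show ?thesis using m(1) by linarith
      qed
      moreover have "\<forall>t\<in>{1..l}. \<forall>e\<in>E. X \<omega> (m*l+t) e"
        using m(2) by (auto simp: B_def Kb_def Y_def)
      ultimately show "\<exists>k\<ge>N. k \<in> {k. \<forall>t\<in>{1..l}. \<forall>e\<in>E. X \<omega> (k+t) e}" by blast
    qed
  qed
qed

theorem theorem1:
  fixes V :: "'v set" and E :: "('v \<times> 'v) set"
    and q :: "('v \<times> 'v) \<Rightarrow> real"
    and M :: "'a measure" and X :: "'a \<Rightarrow> nat \<Rightarrow> ('v \<times> 'v) \<Rightarrow> bool"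
    and y0 z0 :: "'v idx \<Rightarrow> real" and \<mu>z :: real and l :: nat
  assumes finV: "finite V" and neV: "V \<noteq> {}"
    and EV: "E \<subseteq> V \<times> V"
    and selfloops: "\<forall>i\<in>V. (i, i) \<in> E"
    and strongly_connected: "\<forall>i\<in>V. \<forall>j\<in>V. (i, j) \<in> E\<^sup>*"
    and q_range: "\<forall>e\<in>E. 0 < q e \<and> q e \<le> 1"
    and P: "prob_space M"
    and X_rv: "\<forall>k e. (\<lambda>\<omega>. X \<omega> k e) \<in> measurable M (count_space UNIV)"
    and X_indep: "prob_space.indep_vars M (\<lambda>_. count_space UNIV)
                     (\<lambda>(k, e) \<omega>. X \<omega> k e) ({1..} \<times> E)"
    and X_prob: "\<forall>k\<ge>1. \<forall>e\<in>E. measure M {\<omega> \<in> space M. X \<omega> k e} = q e"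
    and y0_nonneg: "\<forall>i\<in>V. y0 (Inl i) \<ge> 0" and z0_nonneg: "\<forall>i\<in>V. z0 (Inl i) \<ge> 0"
    and y0_buf: "\<forall>e\<in>E. y0 (Inr e) = 0" and z0_buf: "\<forall>e\<in>E. z0 (Inr e) = 0"
    and z0_pos: "(\<Sum>j\<in>Idx V E. z0 j) > 0"
    and \<mu>z: "0 < \<mu>z" "\<mu>z \<le> (\<Sum>j\<in>Idx V E. z0 j)"
    and l_pos: "l > 0"
    and l_prop: "\<forall>i\<in>V. \<exists>Ms. length Ms = l \<and> set Ms \<subseteq> Mset E \<and>
                    (\<forall>a\<in>Idx V E. matprod_list (Idx V E) Ms a (Inl i) > 0)"
  shows "\<forall>i\<in>V. AE \<omega> in M.
           (let y = traj V E (X \<omega>) y0; z = traj V E (X \<omega>) z0;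
                \<mu> = \<mu>z * cmin V E ^ l / real (card (Idx V E));
                S = {k. z k (Inl i) \<ge> \<mu>};
                \<tau> = enumerate S
            in infinite S \<and>
               (\<lambda>t. y (\<tau> t) (Inl i) / z (\<tau> t) (Inl i))
                 \<longlonglongrightarrow> (\<Sum>j\<in>Idx V E. y0 j) / (\<Sum>j\<in>Idx V E. z0 j))"
  proof (intro ballI)
  fix i assume iV: "i \<in> V"
  have finE: "finite E" using finV EV finite_subset by blast
  have neE: "E \<noteq> {}" using selfloops iV by auto
  have AEW: "AE \<omega> in M. infinite {k. \<forall>t\<in>{1..l}. \<forall>e\<in>E. X \<omega> (k+t) e}"
    by (rule prob_windows[OF finE neE q_range P X_rv X_indep X_prob l_pos])
  show "AE \<omega> in M.
           (let y = traj V E (X \<omega>) y0; z = traj V E (X \<omega>) z0;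
                \<mu> = \<mu>z * cmin V E ^ l / real (card (Idx V E));
                S = {k. z k (Inl i) \<ge> \<mu>};
                \<tau> = enumerate S
            in infinite S \<and>
               (\<lambda>t. y (\<tau> t) (Inl i) / z (\<tau> t) (Inl i))
                 \<longlonglongrightarrow> (\<Sum>j\<in>Idx V E. y0 j) / (\<Sum>j\<in>Idx V E. z0 j))"
    using AEW
  proof (rule eventually_mono)
    fix \<omega> assume W: "infinite {k. \<forall>t\<in>{1..l}. \<forall>e\<in>E. X \<omega> (k+t) e}"
    show "let y = traj V E (X \<omega>) y0; z = traj V E (X \<omega>) z0;
                \<mu> = \<mu>z * cmin V E ^ l / real (card (Idx V E));
                S = {k. z k (Inl i) \<ge> \<mu>};
                \<tau> = enumerate S
            in infinite S \<and>
               (\<lambda>t. y (\<tau> t) (Inl i) / z (\<tau> t) (Inl i))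
                 \<longlonglongrightarrow> (\<Sum>j\<in>Idx V E. y0 j) / (\<Sum>j\<in>Idx V E. z0 j)"
      by (rule det_main[OF finV EV selfloops neV l_prop W iV z0_nonneg z0_buf z0_pos \<mu>z])
  qed
qed

end
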